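(* Let $(X,d)$ be a metric space, let $\mathcal F\subseteq\mathcal S$ be nonempty, and let $V\subseteq X$ be open with $V\subseteq\overline{A_{\mathcal F}(u,\le t)}$ for all $u\in V$ and all $t>0$. Then $V\subseteq\overline{A_{\mathcal F}(u,t)}$ for all $u\in V$ and all $t>0$. In particular, if $\overline{A_{\operatorname{Sat}(\mathcal F)}(u,\le t)}=X$ for all $u\in X$, $t>0$, then $\overline{A_{\mathcal F}(u,t)}=X$ for all $u\in X$, $t>0$.
   Context: Let $(X,d)$ be a metric space and $\dagger\notin X$ an extra point. A continuous local semigroup on $X$ is a map $(t,u)\mapsto\Phi_tu:[0,\infty)\times X\to X\cup\{\dagger\}$ such that for every $u\in X$ there is $T_u\in(0,\infty]$ with: (i) $\Phi_tu\in X$ for $t<T_u$ and $\Phi_tu=\dagger$ for $t\ge T_u$; (ii) $\Phi_0u=u$, and whenever $s,t\ge 0$ with $s+t<T_u$ one has $t<T_{\Phi_su}$ and $\Phi_{t+s}u=\Phi_t\Phi_su$; (iii) for every $t<T_u$ and $\varepsilon>0$ there is $\delta>0$ such that $|t-t'|+d(u,u')<\delta$ implies $t'<T_{u'}$ and $d(\Phi_tu,\Phi_{t'}u')<\varepsilon$. $\mathcal S$ is the set of all such. Compositions $\Phi^n_{t_n}\cdots\Phi^1_{t_1}u$ are only considered when every partial composition lies in $X$. For $\mathcal F\subseteq\mathcal S$: $A_{\mathcal F}(u,t)=\{\Phi^n_{t_n}\cdots\Phi^1_{t_1}u:\Phi^j\in\mathcal F,\ t_j>0,\ \sum_jt_j=t\}$,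 $A_{\mathcal F}(u,\le t)=\bigcup_{0<s\le t}A_{\mathcal F}(u,s)$. $\mathcal F\preccurlyeq\mathcal G$ means $\overline{A_{\mathcal F}(u,\le t)}\subseteq\overline{A_{\mathcal G}(u,\le t)}$ for all $u\in X,t>0$, and $\operatorname{Sat}(\mathcal F)=\bigcup_{\mathcal G\preccurlyeq\mathcal F}\mathcal G$. *)

theory Defs
  imports "HOL-Analysis.Analysis"
begin

text \<open>The metric space X is the whole type 'a; the extra point (dagger) is None.
  A local semigroup is a map Phi :: real => 'a => 'a option (only t >= 0 matters).\<close>

type_synonym 'a lsg = "real \<Rightarrow> 'a \<Rightarrow> 'a option"

definition local_semigroup :: "('a::metric_space) lsg \<Rightarrow> bool" where
  "local_semigroup \<Phi> \<longleftrightarrow> (\<exists>T :: 'a \<Rightarrow> ereal.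
     (\<forall>u. T u > 0 \<and> (\<forall>t\<ge>0. (\<Phi> t u \<noteq> None \<longleftrightarrow> ereal t < T u))) \<and>
     (\<forall>u. \<Phi> 0 u = Some u) \<and>
     (\<forall>u s t. s \<ge> 0 \<and> t \<ge> 0 \<and> ereal (s + t) < T u \<longrightarrow>
        ereal t < T (the (\<Phi> s u)) \<and> \<Phi> (t + s) u = \<Phi> t (the (\<Phi> s u))) \<and>
     (\<forall>u t \<epsilon>. t \<ge> 0 \<and> ereal t < T u \<and> \<epsilon> > 0 \<longrightarrow>
        (\<exists>\<delta>>0. \<forall>t' u'. t' \<ge> 0 \<and> \<bar>t - t'\<bar> + dist u u' < \<delta> \<longrightarrow>
           ereal t' < T u' \<and> dist (the (\<Phi> t u)) (the (\<Phi> t' u')) < \<epsilon>)))"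

definition SG :: "('a::metric_space) lsg set" where
  "SG = {\<Phi>. local_semigroup \<Phi>}"

fun run :: "('a lsg \<times> real) list \<Rightarrow> 'a \<Rightarrow> 'a option" where
  "run [] u = Some u"
| "run ((\<Phi>, t) # ps) u = (case \<Phi> t u of None \<Rightarrow> None | Some v \<Rightarrow> run ps v)"

definition reach :: "('a::metric_space) lsg set \<Rightarrow> 'a \<Rightarrow> real \<Rightarrow> 'a set" where
  "reach F u t = {v. \<exists>ps. (\<forall>p\<in>set ps. fst p \<in> F \<and> snd p > 0) \<and>
                       sum_list (map snd ps) = t \<and> run ps u = Some v}"

definition reach_le :: "('a::metric_space) lsg set \<Rightarrow> 'a \<Rightarrow> real \<Rightarrow> 'a set" where
  "reach_le F u t = (\<Union>s\<in>{0<..t}. reach F u s)"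

definition sg_preceq :: "('a::metric_space) lsg set \<Rightarrow> 'a lsg set \<Rightarrow> bool" where
  "sg_preceq F G \<longleftrightarrow> (\<forall>u t. t > 0 \<longrightarrow> closure (reach_le F u t) \<subseteq> closure (reach_le G u t))"

definition Sat :: "('a::metric_space) lsg set \<Rightarrow> 'a lsg set" where
  "Sat F = \<Union> {G. G \<subseteq> SG \<and> sg_preceq G F}"

end

theory Submission
  imports Defs
begin

lemma run_append: "run (ps @ qs) u = (case run ps u of None \<Rightarrow> None | Some v \<Rightarrow> run qs v)"
  by (induction ps arbitrary: u) (auto split: option.split)

lemma reach_trans: "v \<in> reach F u s \<Longrightarrow> z \<in> reach F v r \<Longrightarrow> z \<in> reach F u (s+r)"
proof -
  assume "v \<in> reach F u s" "z \<in> reach F v r"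
  then obtain ps qs where "(\<forall>p\<in>set ps. fst p \<in> F \<and> snd p > 0)" "sum_list (map snd ps) = s" "run ps u = Some v"
    "(\<forall>p\<in>set qs. fst p \<in> F \<and> snd p > 0)" "sum_list (map snd qs) = r" "run qs v = Some z"
    unfolding reach_def by auto
  then show ?thesis unfolding reach_def
    by (intro CollectI exI[of _ "ps @ qs"]) (auto simp: run_append)
qed

lemma reach_single: "\<Phi> \<in> F \<Longrightarrow> \<tau> > 0 \<Longrightarrow> \<Phi> \<tau> y = Some z \<Longrightarrow> z \<in> reach F y \<tau>"
  unfolding reach_def by (intro CollectI exI[of _ "[(\<Phi>,\<tau>)]"]) auto

lemma reach_zero: "u \<in> reach F u 0"
  unfolding reach_def by (intro CollectI exI[of _ "[]"]) auto

lemma sum_list_pos: "(\<forall>x\<in>set xs. (x::real) > 0) \<Longrightarrow> xs \<noteq> [] \<Longrightarrow> sum_list xs > 0"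
proof (induction xs)
  case (Cons a xs) then show ?case
    by (cases "xs = []") (auto intro: add_pos_pos)
qed simp

lemma reach_zero_eq: "y \<in> reach F u 0 \<Longrightarrow> y = u"
proof -
  assume "y \<in> reach F u 0"
  then obtain ps where ps: "(\<forall>p\<in>set ps. fst p \<in> F \<and> snd p > 0)" "sum_list (map snd ps) = 0" "run ps u = Some y"
    unfolding reach_def by auto
  have "ps = []"
  proof (rule ccontr)
    assume "ps \<noteq> []"
    then have "sum_list (map snd ps) > 0" using ps(1) by (intro sum_list_pos) auto
    then show False using ps(2) by simp
  qed
  then show ?thesis using ps(3) by simp
qed

lemma ls_zero: "local_semigroup \<Phi> \<Longrightarrow> \<Phi> 0 u = Some u"
  unfolding local_semigroup_def by blast

lemma ls_cont:
  assumes "local_semigroup \<Phi>" "\<tau> \<ge> 0" "\<Phi> \<tau> x = Some v" "e > 0"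
  shows "\<exists>\<delta>>0. \<forall>t' x'. t' \<ge> 0 \<and> \<bar>\<tau> - t'\<bar> + dist x x' < \<delta> \<longrightarrow> (\<exists>v'. \<Phi> t' x' = Some v' \<and> dist v v' < e)"
proof -
  obtain T :: "_ \<Rightarrow> ereal" where T1: "\<forall>u. T u > 0 \<and> (\<forall>t\<ge>0. (\<Phi> t u \<noteq> None \<longleftrightarrow> ereal t < T u))"
    and T4: "\<forall>u t \<epsilon>. t \<ge> 0 \<and> ereal t < T u \<and> \<epsilon> > 0 \<longrightarrow>
        (\<exists>\<delta>>0. \<forall>t' u'. t' \<ge> 0 \<and> \<bar>t - t'\<bar> + dist u u' < \<delta> \<longrightarrow>
           ereal t' < T u' \<and> dist (the (\<Phi> t u)) (the (\<Phi> t' u')) < \<epsilon>)"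
    using assms(1) unfolding local_semigroup_def by blast
  have "ereal \<tau> < T x" using T1 assms(2,3) by auto
  then obtain \<delta> where d: "\<delta> > 0" "\<forall>t' u'. t' \<ge> 0 \<and> \<bar>\<tau> - t'\<bar> + dist x u' < \<delta> \<longrightarrow>
           ereal t' < T u' \<and> dist (the (\<Phi> \<tau> x)) (the (\<Phi> t' u')) < e"
    using T4 assms(2,4) by blast
  show ?thesis
  proof (intro exI[of _ \<delta>] conjI allI impI)
    fix t' x' assume h: "t' \<ge> 0 \<and> \<bar>\<tau> - t'\<bar> + dist x x' < \<delta>"
    then have "ereal t' < T x'" "dist (the (\<Phi> \<tau> x)) (the (\<Phi> t' x')) < e" using d by auto
    then have "\<Phi> t' x' \<noteq> None" using T1 h by auto
    then show "\<exists>v'. \<Phi> t' x' = Some v' \<and> dist v v' < e"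
      using \<open>dist (the (\<Phi> \<tau> x)) (the (\<Phi> t' x')) < e\<close> assms(3) by auto
  qed (use d in auto)
qed

lemma part1:
  assumes "F \<subseteq> SG" "\<Phi> \<in> F" "open V" and H: "\<forall>u\<in>V. \<forall>t>0. V \<subseteq> closure (reach_le F u t)"
    and "w \<in> V" "e > 0"
  shows "\<forall>x\<in>V. \<forall>t>0. \<exists>z\<in>reach F x t. dist w z < e"
proof -
  have ls: "local_semigroup \<Phi>" using assms(1,2) unfolding SG_def by auto
  obtain \<rho> where rho: "\<rho> > 0" "ball w \<rho> \<subseteq> V" using assms(3,5) open_contains_ball by blast
  define \<rho>' where "\<rho>' = min \<rho> e"
  have rho': "\<rho>' > 0" "\<rho>' \<le> e" "ball w \<rho>' \<subseteq> V" using rho assms(6) unfolding \<rho>'_def by auto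
  obtain \<delta>0 where d0: "\<delta>0 > 0" "\<forall>t' x'. t' \<ge> 0 \<and> \<bar>0 - t'\<bar> + dist w x' < \<delta>0 \<longrightarrow> (\<exists>v'. \<Phi> t' x' = Some v' \<and> dist w v' < \<rho>')"
    using ls_cont[OF ls order_refl ls_zero[OF ls] rho'(1)] by blast
  define \<delta> where "\<delta> = min (\<delta>0/2) \<rho>'"
  have dpos: "\<delta> > 0" using d0 rho' unfolding \<delta>_def by auto
  have K: "\<exists>z. \<Phi> \<tau> y = Some z \<and> dist w z < \<rho>'" if "0 \<le> \<tau>" "\<tau> \<le> \<delta>" "dist w y < \<delta>" for \<tau> y
    using d0(2)[rule_format, of \<tau> y] that unfolding \<delta>_def by auto
  have claim: "\<forall>x\<in>V. \<forall>r. 0 < r \<and> r \<le> real n * \<delta> \<longrightarrow> (\<exists>z\<in>reach F x r. dist w z < \<rho>')" for n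
  proof (induction n)
    case 0 then show ?case using dpos by auto
  next
    case (Suc n)
    show ?case
    proof (intro ballI allI impI)
      fix x r assume x: "x \<in> V" and r: "0 < r \<and> r \<le> real (Suc n) * \<delta>"
      have "w \<in> closure (reach_le F x r)" using H x r assms(5) by auto
      then obtain y where y: "y \<in> reach_le F x r" "dist y w < \<delta>"
        using closure_approachable dpos by blast
      then obtain s where s: "0 < s" "s \<le> r" "y \<in> reach F x s" unfolding reach_le_def by auto
      have dy: "dist w y < \<delta>" using y(2) by (simp add: dist_commute)
      consider "s = r" | "s < r" "r - s \<le> \<delta>" | "r - s > \<delta>" using s by linarith
      then show "\<exists>z\<in>reach F x r. dist w z < \<rho>'"
      proof cases
        case 1 then show ?thesis using s dy unfolding \<delta>_def by auto
      next
        case 2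
        then obtain z where z: "\<Phi> (r - s) y = Some z" "dist w z < \<rho>'" using K[of "r-s" y] dy by auto
        have "z \<in> reach F y (r - s)" using reach_single[OF assms(2) _ z(1)] 2 by auto
        then have "z \<in> reach F x (s + (r - s))" using reach_trans s(3) by blast
        then show ?thesis using z by auto
      next
        case 3
        then obtain z where z: "\<Phi> \<delta> y = Some z" "dist w z < \<rho>'" using K[of \<delta> y] dy dpos by auto
        have zr: "z \<in> reach F y \<delta>" using reach_single[OF assms(2) dpos z(1)] .
        have zV: "z \<in> V" using z(2) rho'(3) by auto
        have "0 < r - s - \<delta> \<and> r - s - \<delta> \<le> real n * \<delta>" using 3 r s by (auto simp: algebra_simps)
        then obtain z' where z': "z' \<in> reach F z (r - s - \<delta>)" "dist w z' < \<rho>'" using Suc.IH zV by blast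
        have "z' \<in> reach F x (s + \<delta> + (r - s - \<delta>))" using reach_trans[OF reach_trans[OF s(3) zr] z'(1)] .
        then show ?thesis using z' by auto
      qed
    qed
  qed
  show ?thesis
  proof (intro ballI allI impI)
    fix x t assume x: "x \<in> V" and t: "(t::real) > 0"
    obtain n where n: "t / \<delta> < real n" using reals_Archimedean2 by blast
    then have "t \<le> real n * \<delta>" using dpos by (simp add: divide_less_eq)
    then obtain z where "z \<in> reach F x t" "dist w z < \<rho>'" using claim x t by blast
    then show "\<exists>z\<in>reach F x t. dist w z < e" using rho' by force
  qed
qed

lemma u_cl:
  assumes "F \<subseteq> SG" "F \<noteq> {}" "t > 0"
  shows "u \<in> closure (reach_le F u t)"
proof -
  obtain \<Phi> where P: "\<Phi> \<in> F" using assms(2) by auto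
  have ls: "local_semigroup \<Phi>" using assms(1) P unfolding SG_def by auto
  show ?thesis unfolding closure_approachable
  proof (intro allI impI)
    fix e :: real assume e: "e > 0"
    obtain \<delta> where d: "\<delta> > 0" "\<forall>t' x'. t' \<ge> 0 \<and> \<bar>0 - t'\<bar> + dist u x' < \<delta> \<longrightarrow> (\<exists>v'. \<Phi> t' x' = Some v' \<and> dist u v' < e)"
      using ls_cont[OF ls order_refl ls_zero[OF ls] e] by blast
    define \<tau> where "\<tau> = min (\<delta>/2) t"
    have tau: "\<tau> > 0" "\<tau> \<le> t" "\<tau> < \<delta>" using d assms(3) unfolding \<tau>_def by auto
    then obtain v where v: "\<Phi> \<tau> u = Some v" "dist u v < e" using d(2)[rule_format, of \<tau> u] by auto
    have "v \<in> reach_le F u t" using reach_single[OF P tau(1) v(1)] tau unfolding reach_le_def by auto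
    then show "\<exists>y\<in>reach_le F u t. dist y u < e" using v(2) by (auto simp: dist_commute)
  qed
qed

lemma sat_lemma:
  assumes "F \<subseteq> SG"
  shows "(\<forall>p\<in>set ps. fst p \<in> Sat F \<and> snd p > 0) \<Longrightarrow> run ps u = Some v \<Longrightarrow>
    v \<in> closure {y. \<exists>r. 0 \<le> r \<and> r \<le> sum_list (map snd ps) \<and> y \<in> reach F u r}"
proof (induction ps arbitrary: v rule: rev_induct)
  case Nil
  then have "v \<in> {y. \<exists>r. 0 \<le> r \<and> r \<le> sum_list (map snd ([]::('a lsg \<times> real) list)) \<and> y \<in> reach F u r}"
    using reach_zero by auto
  then show ?case by (rule subsetD[OF closure_subset])
next
  case (snoc p qs)
  obtain \<Phi> \<tau> where p: "p = (\<Phi>, \<tau>)" by (cases p)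
  obtain x where x: "run qs u = Some x" "\<Phi> \<tau> x = Some v"
    using snoc.prems(2) unfolding p run_append by (auto split: option.splits)
  define a where "a = sum_list (map snd qs)"
  have sumeq: "sum_list (map snd (qs @ [p])) = a + \<tau>" unfolding a_def p by simp
  have IH: "x \<in> closure {y. \<exists>r. 0 \<le> r \<and> r \<le> a \<and> y \<in> reach F u r}"
    using snoc.IH[OF _ x(1)] snoc.prems(1) unfolding a_def by auto
  have "\<Phi> \<in> Sat F" "\<tau> > 0" using snoc.prems(1) p by auto
  then obtain G where G: "G \<subseteq> SG" "sg_preceq G F" "\<Phi> \<in> G" unfolding Sat_def by auto
  have ls: "local_semigroup \<Phi>" using G unfolding SG_def by auto
  show ?case unfolding sumeq closure_approachable
  proof (intro allI impI)
    fix e :: real assume e: "e > 0"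
    obtain \<delta> where d: "\<delta> > 0" "\<forall>t' x'. t' \<ge> 0 \<and> \<bar>\<tau> - t'\<bar> + dist x x' < \<delta> \<longrightarrow> (\<exists>v'. \<Phi> t' x' = Some v' \<and> dist v v' < e/2)"
      using ls_cont[OF ls _ x(2), of "e/2"] e \<open>\<tau> > 0\<close> by auto
    obtain x' where x': "x' \<in> {y. \<exists>r. 0 \<le> r \<and> r \<le> a \<and> y \<in> reach F u r}" "dist x' x < \<delta>"
      using IH d(1) unfolding closure_approachable by blast
    obtain b where b: "0 \<le> b" "b \<le> a" "x' \<in> reach F u b" using x'(1) by auto
    obtain v' where v': "\<Phi> \<tau> x' = Some v'" "dist v v' < e/2"
      using d(2)[rule_format, of \<tau> x'] x'(2) \<open>\<tau> > 0\<close> by (auto simp: dist_commute)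
    have "v' \<in> reach_le G x' \<tau>" using reach_single[OF G(3) \<open>\<tau> > 0\<close> v'(1)] \<open>\<tau> > 0\<close>
      unfolding reach_le_def by auto
    then have "v' \<in> closure (reach_le G x' \<tau>)" using closure_subset by blast
    moreover have "closure (reach_le G x' \<tau>) \<subseteq> closure (reach_le F x' \<tau>)"
      using G(2) \<open>\<tau> > 0\<close> unfolding sg_preceq_def by blast
    ultimately have "v' \<in> closure (reach_le F x' \<tau>)" by blast
    then obtain y where y: "y \<in> reach_le F x' \<tau>" "dist y v' < e/2"
      using e unfolding closure_approachable by (metis half_gt_zero)
    then obtain r where r: "0 < r" "r \<le> \<tau>" "y \<in> reach F x' r" unfolding reach_le_def by auto
    have "y \<in> reach F u (b + r)" using reach_trans[OF b(3) r(3)] .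
    moreover have "dist y v < e" using dist_triangle[of y v v'] y(2) v'(2) by (simp add: dist_commute)
    ultimately show "\<exists>y\<in>{y. \<exists>r. 0 \<le> r \<and> r \<le> a + \<tau> \<and> y \<in> reach F u r}. dist y v < e"
    proof (intro bexI[of _ y])
      show "y \<in> {y. \<exists>r. 0 \<le> r \<and> r \<le> a + \<tau> \<and> y \<in> reach F u r}"
        using b r \<open>y \<in> reach F u (b + r)\<close> by (intro CollectI exI[of _ "b + r"]) simp
    qed simp
  qed
qed

theorem lemma3p5:
  fixes F :: "('a::metric_space) lsg set"
  assumes "F \<subseteq> SG" and "F \<noteq> {}"
  shows "(\<forall>V. open V \<and> (\<forall>u\<in>V. \<forall>t>0. V \<subseteq> closure (reach_le F u t)) \<longrightarrow>
              (\<forall>u\<in>V. \<forall>t>0. V \<subseteq> closure (reach F u t)))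
       \<and> ((\<forall>u t. t > 0 \<longrightarrow> closure (reach_le (Sat F) u t) = UNIV) \<longrightarrow>
              (\<forall>u t. t > 0 \<longrightarrow> closure (reach F u t) = UNIV))"
proof -
  obtain \<Phi> where P: "\<Phi> \<in> F" using assms(2) by auto
  have P1: "\<forall>u\<in>V. \<forall>t>0. V \<subseteq> closure (reach F u t)"
    if V: "open V" "\<forall>u\<in>V. \<forall>t>0. V \<subseteq> closure (reach_le F u t)" for V
  proof (intro ballI allI impI subsetI)
    fix u t w assume u: "u \<in> V" and t: "(t::real) > 0" and w: "w \<in> V"
    show "w \<in> closure (reach F u t)" unfolding closure_approachable
    proof (intro allI impI)
      fix e :: real assume "e > 0"
      then obtain z where "z \<in> reach F u t" "dist w z < e"
        using part1[OF assms(1) P V(1) V(2) w] u t by blast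
      then show "\<exists>y\<in>reach F u t. dist y w < e" by (auto simp: dist_commute)
    qed
  qed
  have P2: "\<forall>u t. t > 0 \<longrightarrow> closure (reach F u t) = UNIV"
    if h: "\<forall>u t. t > 0 \<longrightarrow> closure (reach_le (Sat F) u t) = UNIV"
  proof -
    have "UNIV \<subseteq> closure (reach_le F u t)" if t: "t > 0" for u t
    proof -
      have "reach_le (Sat F) u t \<subseteq> closure (reach_le F u t)"
      proof
        fix y assume "y \<in> reach_le (Sat F) u t"
        then obtain s ps where s: "0 < s" "s \<le> t" "(\<forall>p\<in>set ps. fst p \<in> Sat F \<and> snd p > 0)"
          "sum_list (map snd ps) = s" "run ps u = Some y"
          unfolding reach_le_def reach_def by auto
        have y: "y \<in> closure {y. \<exists>r. 0 \<le> r \<and> r \<le> s \<and> y \<in> reach F u r}"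
          using sat_lemma[OF assms(1) s(3) s(5)] s(4) by simp
        have "{y. \<exists>r. 0 \<le> r \<and> r \<le> s \<and> y \<in> reach F u r} \<subseteq> closure (reach_le F u t)"
        proof
          fix z assume "z \<in> {y. \<exists>r. 0 \<le> r \<and> r \<le> s \<and> y \<in> reach F u r}"
          then obtain r where r: "0 \<le> r" "r \<le> s" "z \<in> reach F u r" by auto
          show "z \<in> closure (reach_le F u t)"
          proof (cases "r = 0")
            case True
            then have "z = u" using r reach_zero_eq by blast
            then show ?thesis using u_cl[OF assms t] by simp
          next
            case False
            then have "z \<in> reach_le F u t" using r s unfolding reach_le_def by auto
            then show ?thesis by (rule subsetD[OF closure_subset])
          qed
        qed
        then have "closure {y. \<exists>r. 0 \<le> r \<and> r \<le> s \<and> y \<in> reach F u r} \<subseteq> closure (reach_le F u t)"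
          by (simp add: closure_minimal)
        then show "y \<in> closure (reach_le F u t)" using y by blast
      qed
      then have "closure (reach_le (Sat F) u t) \<subseteq> closure (reach_le F u t)"
        by (simp add: closure_minimal)
      then show ?thesis using h t by simp
    qed
    then have "\<forall>u\<in>UNIV. \<forall>t>0. UNIV \<subseteq> closure (reach F u t)" using P1[of UNIV] by auto
    then show ?thesis by auto
  qed
  show ?thesis using P1 P2 by blast
qed

end
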